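(* Let the data vector $S\in\mathbb{R}^d$ have Gaussian density \[ f(s\mid\beta^* )=(2\pi)^{-d/2}|\Sigma_f|^{-1/2}\exp\!\big(-(s-\mu(\beta^* ))^T\Sigma_f^{-1}(s-\mu(\beta^* ))/2\big), \] with differentiable mean map $\mu:\mathbb{R}^k\to\mathbb{R}^d$ and positive definite $\Sigma_f$, and let $\pi$ be a differentiable prior density on $\beta^*\in\mathbb{R}^k$. Let $D\in\mathbb{R}^{p\times d}$, $P\in\mathbb{R}^{p\times p}$, $q\in\mathbb{R}^p$, let $\Lambda_g^*$ be the convex conjugate of the log-MGF of the randomization, and let $b_{\mathcal{R}_O}$ be a barrier function on the constraint set $\mathcal{R}_O\subset\mathbb{R}^p$. Define the approximate log-normalizer \[ \log\hat{\mathbb{P}}(\beta^* )=-\inf_{s\in\mathbb{R}^d,\,o\in\mathbb{R}^p}\Big\{\tfrac12(s-\mu(\beta^* ))^T\Sigma_f^{-1}(s-\mu(\beta^* ))+\Lambda_g^*(Ds+Po+q)+b_{\mathcal{R}_O}(o)\Big\} \] and the pseudo selective posterior $\tilde\pi_E(\beta^*\mid s)\propto\pi(\beta^* )f(s\mid\beta^* )/\hat{\mathbb{P}}(\beta^* )$. Then the gradient of $\log\tilde\pi_E(\cdot\mid s)$ at $\beta^{*(K)}$ is \[ \frac{\partial\log\pi(\beta^* )}{\partial\beta^*}\Big|_{\beta^{*(K)}}+\Big(\frac{\partial\mu}{\partial\beta^*}\Big)^T\Big|_{\beta^{*(K)}}\Sigma_f^{-1}\Big\{s-s^*\big(\Sigma_f^{-1}\mu(\beta^{*(K)})\big)\Big\},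 \] where \[ s^*\big(\Sigma_f^{-1}\mu(\beta^* )\big)=\arg\max_{z\in\mathbb{R}^d}\Big(z^T\Sigma_f^{-1}\mu(\beta^* )-\tfrac12 z^T\Sigma_f^{-1}z-\inf_{o\in\mathbb{R}^p}\big\{\Lambda_g^*(Dz+Po+q)+b_{\mathcal{R}_O}(o)\big\}\Big). \]
   Context: The log-MGF of the randomization $\Omega\in\mathbb{R}^p$ is $\Lambda_g(t)=\log\mathbb{E}[\exp(t^T\Omega)]$ and its convex conjugate is $\Lambda_g^*(w)=\sup_t\{t^Tw-\Lambda_g(t)\}$. A barrier function $b_{\mathcal{R}_O}$ is a convex penalty finite on the interior of $\mathcal{R}_O$ and increasing continuously towards its boundary. $\partial\mu/\partial\beta^*$ denotes the $d\times k$ Jacobian of $\mu$. *)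

theory Defs
  imports "HOL-Analysis.Analysis" "HOL-Probability.Probability"
begin

definition pos_def_mat :: "real^'n^'n \<Rightarrow> bool" where
  "pos_def_mat A \<longleftrightarrow> transpose A = A \<and> (\<forall>x. x \<noteq> 0 \<longrightarrow> x \<bullet> (A *v x) > 0)"

definition gauss_dens :: "real^'d^'d \<Rightarrow> real^'d \<Rightarrow> real^'d \<Rightarrow> real" where
  "gauss_dens Sig m s =
     (2 * pi) powr (- real CARD('d) / 2) * (det Sig) powr (-1/2) *
     exp (- ((s - m) \<bullet> (matrix_inv Sig *v (s - m))) / 2)"

definition log_mgf :: "(real^'p) measure \<Rightarrow> real^'p \<Rightarrow> ereal" where
  "log_mgf G t =
     (let m = (\<integral>\<^sup>+ w. ennreal (exp (t \<bullet> w)) \<partial>G)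
      in if m = \<infinity> then \<infinity> else ereal (ln (enn2real m)))"

definition conj_fun :: "('a::real_inner \<Rightarrow> ereal) \<Rightarrow> 'a \<Rightarrow> ereal" where
  "conj_fun L w = (SUP t. ereal (t \<bullet> w) - L t)"

definition barrier :: "('p::euclidean_space) set \<Rightarrow> ('p \<Rightarrow> real) \<Rightarrow> bool" where
  "barrier R b \<longleftrightarrow> convex_on (interior R) b \<and> continuous_on (interior R) b \<and>
     (\<forall>x\<in>frontier R. filterlim b at_top (at x within interior R))"

definition barrier_ext :: "('p::euclidean_space) set \<Rightarrow> ('p \<Rightarrow> real) \<Rightarrow> 'p \<Rightarrow> ereal" where
  "barrier_ext R b u = (if u \<in> interior R then ereal (b u) else \<infinity>)"

definition log_Phat ::
  "(real^'k \<Rightarrow> real^'d) \<Rightarrow> real^'d^'d \<Rightarrow> real^'d^'p \<Rightarrow> real^'p^'p \<Rightarrow> real^'p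
   \<Rightarrow> (real^'p) measure \<Rightarrow> (real^'p) set \<Rightarrow> (real^'p \<Rightarrow> real) \<Rightarrow> real^'k \<Rightarrow> ereal" where
  "log_Phat mu Sig D P q G R b beta =
     - (INF s. INF u. ereal ((s - mu beta) \<bullet> (matrix_inv Sig *v (s - mu beta)) / 2)
          + conj_fun (log_mgf G) (D *v s + P *v u + q) + barrier_ext R b u)"

definition sstar_obj ::
  "real^'d^'d \<Rightarrow> real^'d^'p \<Rightarrow> real^'p^'p \<Rightarrow> real^'p
   \<Rightarrow> (real^'p) measure \<Rightarrow> (real^'p) set \<Rightarrow> (real^'p \<Rightarrow> real) \<Rightarrow> real^'d \<Rightarrow> real^'d \<Rightarrow> ereal" where
  "sstar_obj Sig D P q G R b eta z =
     ereal (z \<bullet> eta - z \<bullet> (matrix_inv Sig *v z) / 2)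
     - (INF u. conj_fun (log_mgf G) (D *v z + P *v u + q) + barrier_ext R b u)"

definition s_star ::
  "real^'d^'d \<Rightarrow> real^'d^'p \<Rightarrow> real^'p^'p \<Rightarrow> real^'p
   \<Rightarrow> (real^'p) measure \<Rightarrow> (real^'p) set \<Rightarrow> (real^'p \<Rightarrow> real) \<Rightarrow> real^'d \<Rightarrow> real^'d" where
  "s_star Sig D P q G R b eta = arg_max (sstar_obj Sig D P q G R b eta) (\<lambda>_. True)"

definition grad :: "(real^'k \<Rightarrow> real) \<Rightarrow> real^'k \<Rightarrow> real^'k" where
  "grad f x = (\<chi> i. frechet_derivative f (at x) (axis i 1))"

end

theory Submission
  imports Defs
begin


lemma sym_inner:
  fixes M :: "real^'n^'n"
  assumes "transpose M = M"
  shows "x \<bullet> (M *v y) = y \<bullet> (M *v x)"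
proof -
  have "x \<bullet> (M *v y) = (x v* M) \<bullet> y" by (simp add: dot_lmul_matrix)
  also have "x v* M = transpose M *v x" by simp
  finally show ?thesis using assms by (simp add: inner_commute)
qed

lemma pd_facts:
  fixes Sig :: "real^'d^'d"
  assumes "pos_def_mat Sig"
  shows "invertible Sig" "Sig ** matrix_inv Sig = mat 1" "matrix_inv Sig ** Sig = mat 1"
    "\<And>x y. x \<bullet> (matrix_inv Sig *v y) = y \<bullet> (matrix_inv Sig *v x)"
    "\<And>x. x \<bullet> (matrix_inv Sig *v x) \<ge> 0"
proof -
  have sym: "transpose Sig = Sig" and pd: "\<And>x. x \<noteq> 0 \<Longrightarrow> x \<bullet> (Sig *v x) > 0"
    using assms by (auto simp: pos_def_mat_def)
  have "\<forall>x. Sig *v x = 0 \<longrightarrow> x = 0"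
    using pd by (metis inner_zero_right less_irrefl)
  then obtain B where B: "B ** Sig = mat 1" using matrix_left_invertible_ker by blast
  then have "Sig ** B = mat 1" using matrix_left_right_inverse by blast
  with B show inv: "invertible Sig" unfolding invertible_def by blast
  then have ex: "\<exists>A'. Sig ** A' = mat 1 \<and> A' ** Sig = mat 1" unfolding invertible_def by blast
  from someI_ex[OF ex] show 1: "Sig ** matrix_inv Sig = mat 1" and 2: "matrix_inv Sig ** Sig = mat 1"
    unfolding matrix_inv_def by auto
  have bk: "Sig *v (matrix_inv Sig *v v) = v" for v
    by (simp add: matrix_vector_mul_assoc 1)
  show "x \<bullet> (matrix_inv Sig *v y) = y \<bullet> (matrix_inv Sig *v x)" for x y
  proof -
    have "x \<bullet> (matrix_inv Sig *v y) = (Sig *v (matrix_inv Sig *v x)) \<bullet> (matrix_inv Sig *v y)"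
      by (simp add: bk)
    also have "\<dots> = (matrix_inv Sig *v x) \<bullet> (Sig *v (matrix_inv Sig *v y))"
      using sym_inner[OF sym] by (simp add: inner_commute)
    also have "\<dots> = y \<bullet> (matrix_inv Sig *v x)" by (simp add: bk inner_commute)
    finally show ?thesis .
  qed
  show "x \<bullet> (matrix_inv Sig *v x) \<ge> 0" for x
  proof -
    have "x \<bullet> (matrix_inv Sig *v x) = (matrix_inv Sig *v x) \<bullet> (Sig *v (matrix_inv Sig *v x))"
      by (metis bk inner_commute)
    then show ?thesis using pd[of "matrix_inv Sig *v x"] by (cases "matrix_inv Sig *v x = 0") auto
  qed
qed



lemma INF_add_real1: "ereal a + (INF u. f u) \<le> (INF u. ereal a + f u)"
  by (intro INF_greatest add_left_mono INF_lower) auto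

lemma INF_add_real: "(INF u. ereal a + f u) = ereal a + (INF u. f u)"
proof (rule antisym)
  have "ereal (-a) + (INF u. ereal a + f u) \<le> (INF u. ereal (-a) + (ereal a + f u))"
    by (rule INF_add_real1)
  also have "(\<lambda>u. ereal (-a) + (ereal a + f u)) = f"
    by (rule ext) (simp add: add.assoc[symmetric])
  finally have "ereal (-a) + (INF u. ereal a + f u) \<le> (INF u. f u)" .
  then have "ereal a + (ereal (-a) + (INF u. ereal a + f u)) \<le> ereal a + (INF u. f u)"
    by (rule add_left_mono)
  then show "(INF u. ereal a + f u) \<le> ereal a + (INF u. f u)"
    by (simp add: add.assoc[symmetric])
qed (rule INF_add_real1)

lemma log_mgf_not_minf: "log_mgf G t \<noteq> -\<infinity>"
  by (simp add: log_mgf_def Let_def)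

lemma log_mgf_zero: assumes "prob_space G" shows "log_mgf G 0 = 0"
proof -
  have "(\<integral>\<^sup>+ w. ennreal (exp (0 \<bullet> w)) \<partial>G) = 1"
    using assms by (simp add: prob_space.emeasure_space_1)
  then show ?thesis by (simp add: log_mgf_def Let_def zero_ereal_def)
qed

lemma conj_nonneg: assumes "prob_space G" shows "conj_fun (log_mgf G) w \<ge> 0"
proof -
  have "ereal (0 \<bullet> w) - log_mgf G 0 \<le> conj_fun (log_mgf G) w"
    unfolding conj_fun_def by (rule SUP_upper) auto
  then show ?thesis using log_mgf_zero[OF assms] by (simp add: zero_ereal_def)
qed

lemma conj_convex:
  fixes L :: "'a::real_inner \<Rightarrow> ereal"
  assumes nm: "\<And>t. L t \<noteq> -\<infinity>"
    and a: "conj_fun L w0 \<le> ereal a" and b: "conj_fun L w1 \<le> ereal b"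
    and t: "0 \<le> s" "s \<le> 1"
  shows "conj_fun L ((1 - s) *\<^sub>R w0 + s *\<^sub>R w1) \<le> ereal ((1 - s) * a + s * b)"
  unfolding conj_fun_def
proof (rule SUP_least)
  fix t :: 'a assume "t \<in> UNIV"
  show "ereal (t \<bullet> ((1 - s) *\<^sub>R w0 + s *\<^sub>R w1)) - L t \<le> ereal ((1 - s) * a + s * b)"
  proof (cases "L t")
    case (real l)
    have "ereal (t \<bullet> w0) - L t \<le> ereal a"
      using a unfolding conj_fun_def by (meson SUP_upper UNIV_I order_trans)
    then have 1: "t \<bullet> w0 - l \<le> a" using real by simp
    have "ereal (t \<bullet> w1) - L t \<le> ereal b"
      using b unfolding conj_fun_def by (meson SUP_upper UNIV_I order_trans)
    then have 2: "t \<bullet> w1 - l \<le> b" using real by simp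
    have "t \<bullet> ((1 - s) *\<^sub>R w0 + s *\<^sub>R w1) - l = (1 - s) * (t \<bullet> w0 - l) + s * (t \<bullet> w1 - l)"
      by (simp add: inner_add_right algebra_simps)
    also have "\<dots> \<le> (1 - s) * a + s * b"
      using 1 2 t by (intro add_mono mult_left_mono) auto
    finally show ?thesis using real by simp
  next
    case PInf then show ?thesis by simp
  next
    case MInf then show ?thesis using nm by simp
  qed
qed

lemma quad_bound_deriv:
  fixes f :: "'a::real_normed_vector \<Rightarrow> real"
  assumes bl: "bounded_linear L" and K: "K \<ge> 0"
    and bd: "\<And>y. \<bar>f y - f x - L (y - x)\<bar> \<le> K * (norm (y - x))\<^sup>2"
  shows "(f has_derivative L) (at x)"
  unfolding has_derivative_at'
proof (intro conjI bl allI impI)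
  fix e :: real assume e: "e > 0"
  show "\<exists>d>0. \<forall>x'. 0 < norm (x' - x) \<and> norm (x' - x) < d \<longrightarrow>
        norm (f x' - f x - L (x' - x)) / norm (x' - x) < e"
  proof (intro exI[of _ "e / (K + 1)"] conjI allI impI)
    show "e / (K + 1) > 0" using e K by simp
    fix y assume y: "0 < norm (y - x) \<and> norm (y - x) < e / (K + 1)"
    let ?n = "norm (y - x)"
    have "norm (f y - f x - L (y - x)) / ?n \<le> K * ?n\<^sup>2 / ?n"
      using bd[of y] y by (intro divide_right_mono) auto
    also have "\<dots> = K * ?n" using y by (simp add: power2_eq_square)
    also have "\<dots> \<le> (K + 1) * ?n" using y by (simp add: algebra_simps)
    also have "\<dots> < (K + 1) * (e / (K + 1))" using y K by (intro mult_strict_left_mono) auto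
    also have "\<dots> = e" using K by simp
    finally show "norm (f y - f x - L (y - x)) / ?n < e" .
  qed
qed

lemma limit_t:
  fixes a b c :: real
  assumes "\<And>t. 0 < t \<Longrightarrow> t \<le> 1 \<Longrightarrow> b - t * c \<le> a" and "c \<ge> 0"
  shows "b \<le> a"
proof (rule ccontr)
  assume "\<not> b \<le> a"
  define t where "t = min 1 ((b - a) / (2 * (c + 1)))"
  have t0: "0 < t" "t \<le> 1" using \<open>\<not> b \<le> a\<close> assms(2) by (auto simp: t_def)
  have "t * c \<le> (b - a) / (2 * (c + 1)) * c"
    using assms(2) by (intro mult_right_mono) (auto simp: t_def)
  also have "\<dots> < b - a"
  proof -
    have "(b - a) / (2 * (c + 1)) * c = (b - a) * (c / (2 * (c + 1)))" by simp
    also have "\<dots> < (b - a) * 1"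
      using \<open>\<not> b \<le> a\<close> assms(2) by (intro mult_strict_left_mono) auto
    finally show ?thesis by simp
  qed
  finally show False using assms(1)[OF t0] by linarith
qed

lemma linear_grad:
  fixes L :: "real^'k \<Rightarrow> real"
  assumes "linear L"
  shows "L h = (\<chi> i. L (axis i 1)) \<bullet> h"
proof -
  have "L h = L (\<Sum>i\<in>UNIV. (h$i) *s axis i 1)" by (simp add: basis_expansion)
  also have "\<dots> = (\<Sum>i\<in>UNIV. h$i * L (axis i 1))"
    using assms by (simp add: linear_sum linear_scale scalar_mult_eq_scaleR)
  also have "\<dots> = (\<chi> i. L (axis i 1)) \<bullet> h"
    by (simp add: inner_vec_def mult.commute)
  finally show ?thesis .
qed



theorem theorem4:
  fixes mu :: "real^'k \<Rightarrow> real^'d"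
    and Sig :: "real^'d^'d"
    and prior :: "real^'k \<Rightarrow> real"
    and D :: "real^'d^'p" and P :: "real^'p^'p" and q :: "real^'p"
    and G :: "(real^'p) measure"
    and R :: "(real^'p) set" and b :: "real^'p \<Rightarrow> real"
    and s :: "real^'d" and beta0 :: "real^'k" and c :: real
  assumes Sig_pd: "pos_def_mat Sig"
    and mu_diff: "\<And>beta. mu differentiable (at beta)"
    and prior_nonneg: "\<And>beta. prior beta \<ge> 0"
    and prior_int: "(prior has_integral 1) UNIV"
    and prior_diff: "\<And>beta. prior differentiable (at beta)"
    and prior_pos: "prior beta0 > 0"
    and G_prob: "prob_space G" and G_sets: "sets G = sets borel"
    and b_barrier: "barrier R b"
    and c_pos: "c > 0"
    and Phat_fin: "\<bar>log_Phat mu Sig D P q G R b beta0\<bar> \<noteq> \<infinity>"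
    and argmax_ex: "\<exists>z. is_arg_max (sstar_obj Sig D P q G R b (matrix_inv Sig *v mu beta0))
                           (\<lambda>_. True) z"
  shows "((\<lambda>beta. ln (c * prior beta * gauss_dens Sig (mu beta) s
                      / exp (real_of_ereal (log_Phat mu Sig D P q G R b beta))))
          has_derivative
          (\<lambda>h. (grad (\<lambda>beta. ln (prior beta)) beta0
                 + transpose (jacobian mu (at beta0)) *v
                   (matrix_inv Sig *v
                     (s - s_star Sig D P q G R b (matrix_inv Sig *v mu beta0)))) \<bullet> h))
         (at beta0)"
proof -
  define A where "A = matrix_inv Sig"
  define Q where "Q v = v \<bullet> (A *v v)" for v
  define mu0 where "mu0 = mu beta0"
  have Asym: "\<And>x y. x \<bullet> (A *v y) = y \<bullet> (A *v x)" and Qnn: "\<And>x. Q x \<ge> 0"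
    using pd_facts[OF Sig_pd] by (auto simp: A_def Q_def)
  have Qdiff: "Q (x - y) = Q x - 2 * (x \<bullet> (A *v y)) + Q y" for x y
    unfolding Q_def using Asym[of y x]
    by (simp add: matrix_vector_mult_diff_distrib inner_diff_left inner_diff_right)
  have Qadd: "Q (x + y) = Q x + 2 * (x \<bullet> (A *v y)) + Q y" for x y
    unfolding Q_def using Asym[of y x]
    by (simp add: matrix_vector_right_distrib inner_add_left inner_add_right)
  have Qscale: "Q (t *\<^sub>R x) = t\<^sup>2 * Q x" for t x
    unfolding Q_def by (simp add: matrix_vector_mult_scaleR power2_eq_square)
  obtain K where K: "K \<ge> 0" "\<And>v. Q v \<le> K * (norm v)\<^sup>2"
  proof -
    obtain K0 where K0: "K0 > 0" "\<And>v. norm (A *v v) \<le> norm v * K0"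
      using bounded_linear.pos_bounded[OF matrix_vector_mul_bounded_linear[of A]] by blast
    have "Q v \<le> K0 * (norm v)\<^sup>2" for v
    proof -
      have "Q v \<le> norm v * norm (A *v v)" unfolding Q_def by (rule norm_cauchy_schwarz)
      also have "\<dots> \<le> norm v * (norm v * K0)" by (rule mult_left_mono[OF K0(2)]) simp
      finally show ?thesis by (simp add: power2_eq_square algebra_simps)
    qed
    then show ?thesis using that[of K0] K0 by auto
  qed
  define C where "C = conj_fun (log_mgf G)"
  define Bx where "Bx = barrier_ext R b"
  define H where "H z = (INF u. C (D *v z + P *v u + q) + Bx u)" for z
  define V where "V m = (INF s. INF u. ereal ((s - m) \<bullet> (matrix_inv Sig *v (s - m)) / 2)
          + conj_fun (log_mgf G) (D *v s + P *v u + q) + barrier_ext R b u)" for m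
  have logP: "log_Phat mu Sig D P q G R b beta = - V (mu beta)" for beta
    by (simp add: log_Phat_def V_def)
  have V_eq: "V m = (INF s. ereal (Q (s - m) / 2) + H s)" for m
    unfolding V_def H_def Q_def A_def C_def Bx_def by (simp add: add.assoc INF_add_real)
  have Cnn: "C w \<ge> 0" for w unfolding C_def by (rule conj_nonneg[OF G_prob])
  have Bx_cases: "Bx u = \<infinity> \<or> (u \<in> interior R \<and> Bx u = ereal (b u))" for u
    by (auto simp: Bx_def barrier_ext_def)
  have Vfin0: "\<bar>V mu0\<bar> \<noteq> \<infinity>" using Phat_fin by (simp add: logP mu0_def)
  have Vle: "V m \<le> ereal (Q (y - m) / 2) + H y" for m y
    unfolding V_eq by (rule INF_lower) simp
  have Hnm: "H y \<noteq> -\<infinity>" for y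
  proof
    assume "H y = -\<infinity>"
    then have "V mu0 = -\<infinity>" using Vle[of mu0 y] by simp
    then show False using Vfin0 by simp
  qed
  have Hex: "\<exists>y. H y \<noteq> \<infinity>"
  proof (rule ccontr)
    assume "\<not> ?thesis"
    then have "V mu0 = \<infinity>" unfolding V_eq by simp
    then show False using Vfin0 by simp
  qed
  define eta where "eta = A *v mu0"
  define obj where "obj = sstar_obj Sig D P q G R b eta"
  have obj_eq: "obj z = ereal (z \<bullet> eta - Q z / 2) - H z" for z
    unfolding obj_def sstar_obj_def H_def Q_def A_def C_def Bx_def ..
  define z0 where "z0 = s_star Sig D P q G R b eta"
  have "is_arg_max obj (\<lambda>_. True) z0"
    using someI_ex[OF argmax_ex]
    unfolding z0_def s_star_def arg_max_def obj_def eta_def A_def mu0_def .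
  then have amax: "obj y \<le> obj z0" for y
    by (auto simp: is_arg_max_def not_less)
  have "H z0 \<noteq> \<infinity>"
  proof
    assume inf: "H z0 = \<infinity>"
    obtain y where "H y \<noteq> \<infinity>" using Hex by blast
    then obtain hy where "H y = ereal hy" using Hnm[of y] by (cases "H y") auto
    then have "obj y > -\<infinity>" unfolding obj_eq by simp
    moreover have "obj z0 = -\<infinity>" unfolding obj_eq inf by simp
    ultimately show False using amax[of y] by simp
  qed
  then obtain h0 where h0: "H z0 = ereal h0" using Hnm[of z0] by (cases "H z0") auto
  define w0 where "w0 = z0 - mu0"
  define g where "g = A *v (mu0 - z0)"
  have gform: "g \<bullet> v = - (v \<bullet> (A *v w0))" for v
    unfolding g_def w0_def by (simp add: matrix_vector_mult_diff_distrib inner_diff_left inner_diff_right inner_commute)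
  have minimal: "ereal (Q w0 / 2 + h0) \<le> ereal (Q (y - mu0) / 2) + H y" for y
  proof (cases "H y")
    case (real hy)
    have "obj y \<le> obj z0" by (rule amax)
    then have "y \<bullet> eta - Q y / 2 - hy \<le> z0 \<bullet> eta - Q z0 / 2 - h0"
      unfolding obj_eq using real h0 by simp
    moreover have "Q (y - mu0) = Q y - 2 * (y \<bullet> eta) + Q mu0" "Q w0 = Q z0 - 2 * (z0 \<bullet> eta) + Q mu0"
      unfolding w0_def eta_def by (simp_all add: Qdiff)
    ultimately have "Q w0 / 2 + h0 \<le> Q (y - mu0) / 2 + hy" by linarith
    then show ?thesis using real by simp
  qed (use Hnm in auto)
  have Hconv: "H ((1 - t) *\<^sub>R x + t *\<^sub>R y) \<le> ereal ((1 - t) * a + t * a')"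
    if hx: "H x \<le> ereal a" and hy: "H y \<le> ereal a'" and t: "0 \<le> t" "t \<le> 1" for x y a a' t
  proof (rule ereal_le_epsilon2)
    fix e :: real assume e: "0 < e"
    have approx: "\<exists>u c0. C (D *v z + P *v u + q) = ereal c0 \<and> u \<in> interior R \<and> c0 + b u < a0 + e"
      if hz: "H z \<le> ereal a0" for z a0
    proof -
      have "H z < ereal (a0 + e)" using le_less_trans[OF hz, of "ereal (a0 + e)"] e by simp
      then obtain u where u: "C (D *v z + P *v u + q) + Bx u < ereal (a0 + e)"
        unfolding H_def by (auto simp: INF_less_iff)
      have Cnm: "C (D *v z + P *v u + q) \<noteq> -\<infinity>" using Cnn by (metis not_MInfty_nonneg)
      show ?thesis
      proof (cases "Bx u = \<infinity>")
        case True then show ?thesis using u Cnm by simp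
      next
        case False
        then have ui: "u \<in> interior R" "Bx u = ereal (b u)" using Bx_cases[of u] by auto
        then show ?thesis using u Cnm
          by (cases "C (D *v z + P *v u + q)") auto
      qed
    qed
    obtain u0 c0 where u0: "C (D *v x + P *v u0 + q) = ereal c0" "u0 \<in> interior R" "c0 + b u0 < a + e"
      using approx[OF hx] by blast
    obtain u1 c1 where u1: "C (D *v y + P *v u1 + q) = ereal c1" "u1 \<in> interior R" "c1 + b u1 < a' + e"
      using approx[OF hy] by blast
    define ut where "ut = (1 - t) *\<^sub>R u0 + t *\<^sub>R u1"
    have cvx: "convex_on (interior R) b" using b_barrier by (simp add: barrier_def)
    then have "convex (interior R)" by (simp add: convex_on_def)
    then have uti: "ut \<in> interior R" unfolding ut_def using u0(2) u1(2) t by (simp add: convexD)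
    have bineq: "b ut \<le> (1 - t) * b u0 + t * b u1"
      unfolding ut_def using convex_onD[OF cvx] u0(2) u1(2) t by blast
    have weq: "D *v ((1 - t) *\<^sub>R x + t *\<^sub>R y) + P *v ut + q
        = (1 - t) *\<^sub>R (D *v x + P *v u0 + q) + t *\<^sub>R (D *v y + P *v u1 + q)"
      unfolding ut_def by (simp add: matrix_vector_right_distrib matrix_vector_mult_scaleR algebra_simps)
    have Cineq: "C (D *v ((1 - t) *\<^sub>R x + t *\<^sub>R y) + P *v ut + q) \<le> ereal ((1 - t) * c0 + t * c1)"
      unfolding weq C_def using conj_convex[of "log_mgf G", OF log_mgf_not_minf] u0(1) u1(1) t
      unfolding C_def by simp
    have "H ((1 - t) *\<^sub>R x + t *\<^sub>R y) \<le> C (D *v ((1 - t) *\<^sub>R x + t *\<^sub>R y) + P *v ut + q) + Bx ut"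
      unfolding H_def by (rule INF_lower) simp
    also have "\<dots> \<le> ereal ((1 - t) * c0 + t * c1) + ereal (b ut)"
      using add_right_mono[OF Cineq, of "ereal (b ut)"] uti by (simp add: Bx_def barrier_ext_def)
    also have "\<dots> \<le> ereal ((1 - t) * a + t * a') + ereal e"
    proof -
      have "(1 - t) * (c0 + b u0) \<le> (1 - t) * (a + e)" using u0(3) t by (intro mult_left_mono) auto
      moreover have "t * (c1 + b u1) \<le> t * (a' + e)" using u1(3) t by (intro mult_left_mono) auto
      ultimately have "(1 - t) * c0 + t * c1 + b ut \<le> (1 - t) * a + t * a' + e"
        using bineq by (simp add: algebra_simps)
      then show ?thesis by simp
    qed
    finally show "H ((1 - t) *\<^sub>R x + t *\<^sub>R y) \<le> ereal ((1 - t) * a + t * a') + ereal e" .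
  qed
  have subg: "ereal (h0 + g \<bullet> (z - z0)) \<le> H z" for z
  proof (cases "H z")
    case (real hz)
    define e where "e = z - z0"
    have "g \<bullet> e - t * (Q e / 2) \<le> hz - h0" if t: "0 < t" "t \<le> 1" for t
    proof -
      define zt where "zt = (1 - t) *\<^sub>R z0 + t *\<^sub>R z"
      have Hzt: "H zt \<le> ereal ((1 - t) * h0 + t * hz)"
        unfolding zt_def using Hconv[of z0 h0 z hz t] h0 real t by simp
      then obtain hzt where hzt: "H zt = ereal hzt" "hzt \<le> (1 - t) * h0 + t * hz"
        using Hnm[of zt] by (cases "H zt") auto
      have "ereal (Q w0 / 2 + h0) \<le> ereal (Q (zt - mu0) / 2) + H zt" by (rule minimal)
      then have m: "Q w0 / 2 + h0 \<le> Q (zt - mu0) / 2 + hzt" using hzt by simp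
      have "zt - mu0 = w0 + t *\<^sub>R e" unfolding zt_def w0_def e_def by (simp add: algebra_simps)
      then have "Q (zt - mu0) = Q w0 + 2 * t * (w0 \<bullet> (A *v e)) + t\<^sup>2 * Q e"
        by (simp add: Qadd Qscale matrix_vector_mult_scaleR)
      then have e1: "Q (zt - mu0) = Q w0 + 2 * (t * (w0 \<bullet> (A *v e))) + t * t * Q e"
        by (simp add: power2_eq_square algebra_simps)
      have e2: "t * (h0 - hz - w0 \<bullet> (A *v e) - t * (Q e / 2))
          = t * h0 - t * hz - t * (w0 \<bullet> (A *v e)) - t * t * Q e / 2"
        by (simp add: algebra_simps)
      have e3: "(1 - t) * h0 + t * hz = h0 - t * h0 + t * hz" by (simp add: algebra_simps)
      have "t * (h0 - hz - w0 \<bullet> (A *v e) - t * (Q e / 2)) \<le> 0"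
        using m hzt(2) e1 e2 e3 by linarith
      then have "h0 - hz - w0 \<bullet> (A *v e) - t * (Q e / 2) \<le> 0"
        using t by (simp add: mult_le_0_iff)
      moreover have "g \<bullet> e = - (w0 \<bullet> (A *v e))" using gform[of e] Asym[of e w0] by simp
      ultimately show ?thesis by simp
    qed
    moreover have "0 \<le> Q e / 2" using Qnn[of e] by simp
    ultimately have "g \<bullet> e \<le> hz - h0" by (rule limit_t)
    then show ?thesis using real by (simp add: e_def)
  qed (use Hnm in auto)
  define v0 where "v0 = Q w0 / 2 + h0"
  have lower: "ereal (v0 + g \<bullet> (m - mu0)) \<le> V m" for m
    unfolding V_eq
  proof (rule INF_greatest)
    fix y assume "y \<in> (UNIV :: (real^'d) set)"
    have "ereal (Q (y - m) / 2) + ereal (h0 + g \<bullet> (y - z0)) \<le> ereal (Q (y - m) / 2) + H y"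
      by (rule add_left_mono[OF subg])
    moreover have "v0 + g \<bullet> (m - mu0) \<le> Q (y - m) / 2 + (h0 + g \<bullet> (y - z0))"
    proof -
      have eq: "y - z0 = (y - m) - w0 + (m - mu0)" by (simp add: w0_def algebra_simps)
      have "Q ((y - m) - w0) \<ge> 0" by (rule Qnn)
      then have "0 \<le> Q (y - m) - 2 * ((y - m) \<bullet> (A *v w0)) + Q w0" by (simp add: Qdiff)
      moreover have "g \<bullet> (y - z0) = - ((y - m) \<bullet> (A *v w0)) + Q w0 + g \<bullet> (m - mu0)"
        unfolding eq by (simp add: inner_add_right inner_diff_right inner_diff_left gform Q_def)
      ultimately show ?thesis unfolding v0_def by simp
    qed
    ultimately show "ereal (v0 + g \<bullet> (m - mu0)) \<le> ereal (Q (y - m) / 2) + H y"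
      by (metis ereal_less_eq(3) order_trans plus_ereal.simps(1))
  qed
  have upper: "V m \<le> ereal (v0 + g \<bullet> (m - mu0) + Q (m - mu0) / 2)" for m
  proof -
    have "V m \<le> ereal (Q (z0 - m) / 2) + H z0" by (rule Vle)
    moreover have "Q (z0 - m) = Q w0 - 2 * (w0 \<bullet> (A *v (m - mu0))) + Q (m - mu0)"
    proof -
      have zz: "z0 - m = w0 - (m - mu0)" by (simp add: w0_def)
      show ?thesis unfolding zz by (rule Qdiff)
    qed
    moreover have "g \<bullet> (m - mu0) = - (w0 \<bullet> (A *v (m - mu0)))"
      using gform[of "m - mu0"] Asym[of "m - mu0" w0] by simp
    moreover note h0
    ultimately have "V m \<le> ereal (Q (z0 - m) / 2 + h0)" "Q (z0 - m) / 2 + h0 = v0 + g \<bullet> (m - mu0) + Q (m - mu0) / 2"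
      unfolding v0_def by (simp, linarith)
    then show ?thesis by simp
  qed
  define Vr where "Vr m = real_of_ereal (V m)" for m
  have Vr: "V m = ereal (Vr m)" "v0 + g \<bullet> (m - mu0) \<le> Vr m"
       "Vr m \<le> v0 + g \<bullet> (m - mu0) + Q (m - mu0) / 2" for m
  proof -
    have l: "ereal (v0 + g \<bullet> (m - mu0)) \<le> V m" by (rule lower)
    have u: "V m \<le> ereal (v0 + g \<bullet> (m - mu0) + Q (m - mu0) / 2)" by (rule upper)
    from l u obtain r where "V m = ereal r" by (cases "V m") auto
    then show "V m = ereal (Vr m)" "v0 + g \<bullet> (m - mu0) \<le> Vr m"
       "Vr m \<le> v0 + g \<bullet> (m - mu0) + Q (m - mu0) / 2" using l u by (auto simp: Vr_def)
  qed
  have Vr0: "Vr mu0 = v0" using Vr(2)[of mu0] Vr(3)[of mu0] by (simp add: Q_def)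
  define phi where "phi m = - Q (s - m) / 2 + Vr m" for m
  define L where "L d = (A *v (s - z0)) \<bullet> d" for d
  have phi_der: "(phi has_derivative L) (at mu0)"
  proof (rule quad_bound_deriv[where K = K])
    show "bounded_linear L" unfolding L_def by (rule bounded_linear_inner_right)
    show "K \<ge> 0" by (rule K(1))
    fix m
    define d where "d = m - mu0"
    have sm: "s - m = (s - mu0) - d" by (simp add: d_def)
    have Ld: "L d = (s - mu0) \<bullet> (A *v d) + g \<bullet> d"
      unfolding L_def g_def
      using Asym[of "s - mu0" d]
      by (simp add: matrix_vector_mult_diff_distrib inner_diff_left inner_diff_right inner_commute)
    have "phi m - phi mu0 - L (m - mu0) = (Vr m - Vr mu0 - g \<bullet> d) - Q d / 2"
    proof -
      have q1: "Q (s - m) = Q (s - mu0) - 2 * ((s - mu0) \<bullet> (A *v d)) + Q d"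
        unfolding sm by (rule Qdiff)
      have "m - mu0 = d" by (simp add: d_def)
      then show ?thesis unfolding phi_def using q1 Ld by (simp add: field_simps)
    qed
    moreover have "0 \<le> Vr m - Vr mu0 - g \<bullet> d" "Vr m - Vr mu0 - g \<bullet> d \<le> Q d / 2"
      using Vr(2)[of m] Vr(3)[of m] Vr0 by (simp_all add: d_def)
    ultimately have "\<bar>phi m - phi mu0 - L (m - mu0)\<bar> \<le> Q d" using Qnn[of d] by simp
    also have "\<dots> \<le> K * (norm (m - mu0))\<^sup>2" using K(2) by (simp add: d_def)
    finally show "\<bar>phi m - phi mu0 - L (m - mu0)\<bar> \<le> K * (norm (m - mu0))\<^sup>2" .
  qed

  have mu_der: "(mu has_derivative (\<lambda>h. jacobian mu (at beta0) *v h)) (at beta0)"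
    using jacobian_works mu_diff by blast
  have comp: "((\<lambda>beta. phi (mu beta)) has_derivative (\<lambda>h. L (jacobian mu (at beta0) *v h))) (at beta0)"
    using has_derivative_compose[OF mu_der phi_der[unfolded mu0_def]] .
  define F where "F = (\<lambda>beta. ln (prior beta))"
  have Fdiff: "F differentiable (at beta0)"
  proof -
    obtain p' where "(prior has_derivative p') (at beta0)"
      using prior_diff[of beta0] by (auto simp: differentiable_def)
    from has_derivative_ln[OF prior_pos this] show ?thesis
      unfolding F_def differentiable_def by blast
  qed
  have F_der: "(F has_derivative (\<lambda>h. grad F beta0 \<bullet> h)) (at beta0)"
  proof -
    have "(F has_derivative frechet_derivative F (at beta0)) (at beta0)"
      using Fdiff frechet_derivative_works by blast
    moreover have "frechet_derivative F (at beta0) = (\<lambda>h. grad F beta0 \<bullet> h)"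
      unfolding grad_def by (rule ext, rule linear_grad[OF linear_frechet_derivative[OF Fdiff]])
    ultimately show ?thesis by simp
  qed
  define K0 where "K0 = (2 * pi) powr (- real CARD('d) / 2) * (det Sig) powr (-1/2)"
  have detnz: "det Sig \<noteq> 0" using pd_facts(1)[OF Sig_pd] invertible_det_nz by blast
  have K0pos: "K0 > 0" unfolding K0_def using detnz by simp
  define S where "S = {beta. 0 < prior beta}"
  have Sopen: "open S"
  proof -
    have "continuous_on UNIV prior"
      by (rule differentiable_imp_continuous_on)
         (simp add: differentiable_on_def prior_diff differentiable_at_withinI)
    then show ?thesis unfolding S_def by (intro open_Collect_less continuous_on_const)
  qed
  have total0: "((\<lambda>beta. (ln c + ln K0) + F beta + phi (mu beta)) has_derivative
       (\<lambda>h. 0 + grad F beta0 \<bullet> h + L (jacobian mu (at beta0) *v h))) (at beta0)"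
    by (intro has_derivative_add has_derivative_const F_der comp)
  have eq_on: "(ln c + ln K0) + F beta + phi (mu beta) = ln (c * prior beta * gauss_dens Sig (mu beta) s
        / exp (real_of_ereal (log_Phat mu Sig D P q G R b beta)))" if "beta \<in> S" for beta
  proof -
    have p: "prior beta > 0" using that by (simp add: S_def)
    have gd: "gauss_dens Sig (mu beta) s = K0 * exp (- Q (s - mu beta) / 2)"
      unfolding gauss_dens_def K0_def Q_def A_def by simp
    have lp: "real_of_ereal (log_Phat mu Sig D P q G R b beta) = - Vr (mu beta)"
      using Vr(1)[of "mu beta"] by (simp add: logP)
    show ?thesis unfolding gd lp phi_def F_def using p c_pos K0pos
      by (simp add: ln_mult ln_div)
  qed
  have res: "((\<lambda>beta. ln (c * prior beta * gauss_dens Sig (mu beta) s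
        / exp (real_of_ereal (log_Phat mu Sig D P q G R b beta)))) has_derivative
       (\<lambda>h. 0 + grad F beta0 \<bullet> h + L (jacobian mu (at beta0) *v h))) (at beta0)"
    by (rule has_derivative_transform_within_open[OF total0 Sopen _ eq_on]) (simp_all add: S_def prior_pos)
  have deq: "(\<lambda>h. 0 + grad F beta0 \<bullet> h + L (jacobian mu (at beta0) *v h)) =
     (\<lambda>h. (grad (\<lambda>beta. ln (prior beta)) beta0
                 + transpose (jacobian mu (at beta0)) *v
                   (matrix_inv Sig *v
                     (s - s_star Sig D P q G R b (matrix_inv Sig *v mu beta0)))) \<bullet> h)"
    by (rule ext) (simp add: L_def z0_def eta_def A_def mu0_def F_def inner_add_left dot_lmul_matrix)
  show ?thesis using res unfolding deq .
qed

end
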